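(* Let $\mathbf K$ be a commutative field. (i) For all $p,q\in\mathbb N$, an element $X\in\mathbf K^{\mathcal M_{p\times q}}$ is a recurrence matrix if and only if it is a birecurrence matrix. (ii) The palindromic automorphism $\iota$ of $\mathbf K^{\mathcal M_{p\times q}}$ restricts to an involutive automorphism of $\mathrm{Rec}_{p\times q}(\mathbf K)$; consequently, if $\mathrm{char}\,\mathbf K\ne2$, for $A\in\mathrm{Rec}_{p\times q}(\mathbf K)$ the even and odd parts $A_+=(A+\iota A)/2$ and $A_-=(A-\iota A)/2$ lie in $\mathrm{Rec}_{p\times q}(\mathbf K)$. (iii) The palindromic automorphism yields an involutive automorphic functor of the category of recurrence matrices: it preserves each $\mathrm{Rec}_{p\times q}(\mathbf K)$ and satisfies $\iota(AB)=\iota(A)\iota(B)$ for $A\in\mathrm{Rec}_{p\times r}(\mathbf K)$, $B\in\mathrm{Rec}_{r\times q}(\mathbf K)$.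
   Context: $\mathcal M_{p\times q}$ is the monoid of pairs $(U,W)$ of words of common length with $U$ over $\{0,\dots,p-1\}$, $W$ over $\{0,\dots,q-1\}$. For $X:\mathcal M_{p\times q}\to\mathbf K$ (values $X[U,W]$): right shifts $(\rho(S,T)X)[U,W]=X[US,WT]$; left shifts $(\lambda(s_1\dots s_n,t_1\dots t_n)X)[U,W]=X[s_n\dots s_1U,t_n\dots t_1W]$. $X$ is a recurrence matrix (element of $\mathrm{Rec}_{p\times q}(\mathbf K)$) if the span of $\{\rho(S,T)X\}$ is finite-dimensional, and a birecurrence matrix if the span of $\{\lambda(S',T')\rho(S,T)X\}$ is finite-dimensional. The palindromic automorphism is $(\iota X)[s_1\dots s_n,t_1\dots t_n]=X[s_n\dots s_1,t_n\dots t_1]$. Matrix product: $(AB)[U,W]=\sum_{V\in\{0,\dots,r-1\}^l}A[U,V]B[V,W]$ for $(U,W)$ of length $l$. *)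

theory Defs
  imports Complex_Main "HOL-Library.Function_Algebras"
begin

text \<open>An element of K^{M_{p x q}} is represented as a function on pairs of lists which
  vanishes outside M_{p x q}.\<close>

definition Mpq :: "nat \<Rightarrow> nat \<Rightarrow> (nat list \<times> nat list) set" where
  "Mpq p q = {(U, W). length U = length W \<and> set U \<subseteq> {..<p} \<and> set W \<subseteq> {..<q}}"

type_synonym 'a rmat = "nat list \<times> nat list \<Rightarrow> 'a"

definition is_mat :: "nat \<Rightarrow> nat \<Rightarrow> 'a::zero rmat \<Rightarrow> bool" where
  "is_mat p q X \<longleftrightarrow> (\<forall>x. x \<notin> Mpq p q \<longrightarrow> X x = 0)"

definition mscale :: "'a::times \<Rightarrow> 'a rmat \<Rightarrow> 'a rmat" where
  "mscale c X = (\<lambda>x. c * X x)"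

definition fin_dim_span :: "'a::field rmat set \<Rightarrow> bool" where
  "fin_dim_span S \<longleftrightarrow> (\<exists>B. finite B \<and> module.span mscale S \<subseteq> module.span mscale B)"

definition rshift :: "nat \<Rightarrow> nat \<Rightarrow> nat list \<Rightarrow> nat list \<Rightarrow> 'a::zero rmat \<Rightarrow> 'a rmat" where
  "rshift p q S T X = (\<lambda>(U, W). if (U, W) \<in> Mpq p q then X (U @ S, W @ T) else 0)"

definition lshift :: "nat \<Rightarrow> nat \<Rightarrow> nat list \<Rightarrow> nat list \<Rightarrow> 'a::zero rmat \<Rightarrow> 'a rmat" where
  "lshift p q S T X = (\<lambda>(U, W). if (U, W) \<in> Mpq p q then X (rev S @ U, rev T @ W) else 0)"

definition is_rec :: "nat \<Rightarrow> nat \<Rightarrow> 'a::field rmat \<Rightarrow> bool" where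
  "is_rec p q X \<longleftrightarrow> is_mat p q X \<and>
     fin_dim_span {rshift p q S T X | S T. (S, T) \<in> Mpq p q}"

definition is_birec :: "nat \<Rightarrow> nat \<Rightarrow> 'a::field rmat \<Rightarrow> bool" where
  "is_birec p q X \<longleftrightarrow> is_mat p q X \<and>
     fin_dim_span {lshift p q S' T' (rshift p q S T X) | S T S' T'.
                     (S, T) \<in> Mpq p q \<and> (S', T') \<in> Mpq p q}"

definition iota :: "'a rmat \<Rightarrow> 'a rmat" where
  "iota X = (\<lambda>(U, W). X (rev U, rev W))"

definition mprod :: "nat \<Rightarrow> nat \<Rightarrow> nat \<Rightarrow> 'a::comm_semiring_0 rmat \<Rightarrow> 'a rmat \<Rightarrow> 'a rmat" where
  "mprod p r q A B = (\<lambda>(U, W). if (U, W) \<in> Mpq p q then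
      (\<Sum>V\<in>{V. length V = length U \<and> set V \<subseteq> {..<r}}. A (U, V) * B (V, W)) else 0)"

end

theory Submission
  imports Defs
begin

interpretation v: vector_space "mscale :: 'a::field \<Rightarrow> 'a rmat \<Rightarrow> 'a rmat"
  by unfold_locales (auto simp: mscale_def fun_eq_iff algebra_simps)

lemma span_lin_image:
  fixes L :: "'a::field rmat \<Rightarrow> 'a rmat"
  assumes add: "\<And>x y. L (x + y) = L x + L y"
    and sc: "\<And>c x. L (mscale c x) = mscale c (L x)"
    and f: "f \<in> v.span S"
  shows "L f \<in> v.span (L ` S)"
  using f
proof (induction rule: v.span_induct_alt)
  case base
  have z: "mscale 0 (0::'a rmat) = 0" by (simp add: mscale_def fun_eq_iff)
  have "L 0 = mscale 0 (L 0)" by (metis z sc)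
  then have "L 0 = 0" by (simp add: mscale_def fun_eq_iff)
  then show ?case using v.span_zero by metis
next
  case (step c x y)
  have e: "L (mscale c x + y) = mscale c (L x) + L y" by (simp only: add sc)
  have "mscale c (L x) \<in> v.span (L ` S)"
    by (rule v.span_scale, rule v.span_base, use step in blast)
  then show ?case using e step(2) v.span_add by metis
qed

lemma fin_basis:
  fixes S :: "'a::field rmat set"
  assumes "fin_dim_span S"
  shows "\<exists>F. finite F \<and> F \<subseteq> S \<and> S \<subseteq> v.span F"
proof -
  obtain B where B: "finite B" "v.span S \<subseteq> v.span B" using assms fin_dim_span_def by blast
  obtain F where F: "F \<subseteq> S" "v.independent F" "S \<subseteq> v.span F"
    using v.maximal_independent_subset by blast
  have "F \<subseteq> v.span B" using F(1) B(2) v.span_superset by blast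
  then have "finite F" using v.independent_span_bound[OF B(1) F(2)] by blast
  then show ?thesis using F by blast
qed

lemma sum_fun_apply: "(\<Sum>b\<in>B. (f b :: 'x \<Rightarrow> 'y::comm_monoid_add)) x = (\<Sum>b\<in>B. f b x)"
  by (induction B rule: infinite_finite_induct) auto

lemma Mpq_rev[simp]: "(rev U, rev W) \<in> Mpq p q \<longleftrightarrow> (U, W) \<in> Mpq p q"
  by (auto simp: Mpq_def)

lemma Mpq_app: "(U, W) \<in> Mpq p q \<Longrightarrow> (S, T) \<in> Mpq p q \<Longrightarrow> (U @ S, W @ T) \<in> Mpq p q"
  by (auto simp: Mpq_def)

lemma span_sub_fin:
  fixes A :: "'a::field rmat set"
  assumes "finite B" "A \<subseteq> v.span B"
  shows "fin_dim_span A"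
  unfolding fin_dim_span_def
  using assms v.span_minimal[OF assms(2) v.subspace_span] by blast

lemma in_span_sum:
  fixes a :: "'b \<Rightarrow> 'a::field rmat"
  shows "(\<Sum>b\<in>B. mscale (k b) (a b)) \<in> v.span (a ` B)"
  by (intro v.span_sum v.span_scale v.span_base) auto

lemma span_repr:
  fixes B :: "'a::field rmat set"
  assumes "finite B" "f \<in> v.span B"
  shows "\<exists>c. f = (\<Sum>b\<in>B. mscale (c b) b)"
  using assms v.span_finite by blast

lemma rows_to_cols:
  fixes X :: "'a::field rmat"
  assumes "fin_dim_span {rshift p q S T X | S T. (S,T) \<in> Mpq p q}"
  shows "fin_dim_span {lshift p q S T X | S T. (S,T) \<in> Mpq p q}"
proof -
  obtain B where B: "finite B" "v.span {rshift p q S T X | S T. (S,T) \<in> Mpq p q} \<subseteq> v.span B"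
    using assms fin_dim_span_def by blast
  have ex: "\<forall>s. \<exists>c. s \<in> Mpq p q \<longrightarrow> rshift p q (fst s) (snd s) X = (\<Sum>b\<in>B. mscale (c b) b)"
  proof
    fix s :: "nat list \<times> nat list"
    show "\<exists>c. s \<in> Mpq p q \<longrightarrow> rshift p q (fst s) (snd s) X = (\<Sum>b\<in>B. mscale (c b) b)"
    proof (cases "s \<in> Mpq p q")
      case True
      have "rshift p q (fst s) (snd s) X \<in> {rshift p q S T X | S T. (S,T) \<in> Mpq p q}"
        using True by (cases s) (simp, blast)
      then have "rshift p q (fst s) (snd s) X \<in> v.span B"
        using B(2) v.span_superset[of "{rshift p q S T X | S T. (S,T) \<in> Mpq p q}"]
        by blast
      then show ?thesis using span_repr[OF B(1)] by blast
    qed auto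
  qed
  obtain c where c: "\<And>s. s \<in> Mpq p q \<Longrightarrow> rshift p q (fst s) (snd s) X = (\<Sum>b\<in>B. mscale (c s b) b)"
    using choice[OF ex] by blast
  define a where "a b = (\<lambda>s. if s \<in> Mpq p q then c s b else 0)" for b
  have eq: "lshift p q S' T' X = (\<Sum>b\<in>B. mscale (b (rev S', rev T')) (a b))"
    if M: "(S',T') \<in> Mpq p q" for S' T'
  proof (rule ext, clarify)
    fix S T
    show "lshift p q S' T' X (S, T) = (\<Sum>b\<in>B. mscale (b (rev S', rev T')) (a b)) (S, T)"
    proof (cases "(S, T) \<in> Mpq p q")
      case True
      have "X (rev S' @ S, rev T' @ T) = rshift p q S T X (rev S', rev T')"
        using M by (simp add: rshift_def)
      also have "\<dots> = (\<Sum>b\<in>B. mscale (c (S,T) b) b) (rev S', rev T')"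
        using c[OF True] by simp
      finally show ?thesis using True
        by (simp add: lshift_def sum_fun_apply mscale_def a_def mult.commute)
    next
      case False
      then show ?thesis by (simp add: lshift_def sum_fun_apply mscale_def a_def)
    qed
  qed
  show ?thesis
    by (rule span_sub_fin[of "a ` B"]) (use B(1) eq in_span_sum in auto)
qed

lemma cols_to_rows:
  fixes X :: "'a::field rmat"
  assumes "fin_dim_span {lshift p q S T X | S T. (S,T) \<in> Mpq p q}"
  shows "fin_dim_span {rshift p q S T X | S T. (S,T) \<in> Mpq p q}"
proof -
  obtain B where B: "finite B" "v.span {lshift p q S T X | S T. (S,T) \<in> Mpq p q} \<subseteq> v.span B"
    using assms fin_dim_span_def by blast
  have ex: "\<forall>s. \<exists>c. s \<in> Mpq p q \<longrightarrow> lshift p q (fst s) (snd s) X = (\<Sum>b\<in>B. mscale (c b) b)"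
  proof
    fix s :: "nat list \<times> nat list"
    show "\<exists>c. s \<in> Mpq p q \<longrightarrow> lshift p q (fst s) (snd s) X = (\<Sum>b\<in>B. mscale (c b) b)"
    proof (cases "s \<in> Mpq p q")
      case True
      have "lshift p q (fst s) (snd s) X \<in> {lshift p q S T X | S T. (S,T) \<in> Mpq p q}"
        using True by (cases s) (simp, blast)
      then have "lshift p q (fst s) (snd s) X \<in> v.span B"
        using B(2) v.span_superset[of "{lshift p q S T X | S T. (S,T) \<in> Mpq p q}"]
        by blast
      then show ?thesis using span_repr[OF B(1)] by blast
    qed auto
  qed
  obtain c where c: "\<And>s. s \<in> Mpq p q \<Longrightarrow> lshift p q (fst s) (snd s) X = (\<Sum>b\<in>B. mscale (c s b) b)"
    using choice[OF ex] by blast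
  define a where "a b = (\<lambda>(U, W). if (U, W) \<in> Mpq p q then c (rev U, rev W) b else 0)" for b
  have eq: "rshift p q S T X = (\<Sum>b\<in>B. mscale (b (S, T)) (a b))"
    if M: "(S,T) \<in> Mpq p q" for S T
  proof (rule ext, clarify)
    fix U W
    show "rshift p q S T X (U, W) = (\<Sum>b\<in>B. mscale (b (S, T)) (a b)) (U, W)"
    proof (cases "(U, W) \<in> Mpq p q")
      case True
      have "X (U @ S, W @ T) = lshift p q (rev U) (rev W) X (S, T)"
        using M by (simp add: lshift_def)
      also have "\<dots> = (\<Sum>b\<in>B. mscale (c (rev U, rev W) b) b) (S, T)"
        using c[of "(rev U, rev W)"] True by simp
      finally show ?thesis using True
        by (simp add: rshift_def sum_fun_apply mscale_def a_def mult.commute)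
    next
      case False
      then show ?thesis by (simp add: rshift_def sum_fun_apply mscale_def a_def)
    qed
  qed
  show ?thesis
    by (rule span_sub_fin[of "a ` B"]) (use B(1) eq in_span_sum in auto)
qed

lemma lshift_add: "lshift p q S T (x + y) = lshift p q S T x + lshift p q S T (y :: 'a::field rmat)"
  by (auto simp: lshift_def fun_eq_iff)
lemma lshift_scale: "lshift p q S T (mscale c x) = mscale c (lshift p q S T (x :: 'a::field rmat))"
  by (auto simp: lshift_def fun_eq_iff mscale_def)
lemma rshift_add: "rshift p q S T (x + y) = rshift p q S T x + rshift p q S T (y :: 'a::field rmat)"
  by (auto simp: rshift_def fun_eq_iff)
lemma rshift_scale: "rshift p q S T (mscale c x) = mscale c (rshift p q S T (x :: 'a::field rmat))"
  by (auto simp: rshift_def fun_eq_iff mscale_def)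
lemma iota_add: "iota (x + y) = iota x + iota (y :: 'a::field rmat)"
  by (auto simp: iota_def fun_eq_iff)
lemma iota_scale: "iota (mscale c x) = mscale c (iota (x :: 'a::field rmat))"
  by (auto simp: iota_def fun_eq_iff mscale_def)
lemma iota_iota: "iota (iota x) = x"
  by (auto simp: iota_def fun_eq_iff)

lemma lr_comm:
  assumes "(S, T) \<in> Mpq p q" "(S', T') \<in> Mpq p q"
  shows "lshift p q S' T' (rshift p q S T X) = rshift p q S T (lshift p q S' T' X)"
  using assms by (auto simp: lshift_def rshift_def fun_eq_iff Mpq_app)

lemma l_nil: "lshift p q [] [] (rshift p q S T X) = rshift p q S T X"
  by (auto simp: lshift_def rshift_def fun_eq_iff)

lemma nil_Mpq: "([], []) \<in> Mpq p q"
  by (simp add: Mpq_def)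

lemma rec_birec:
  fixes X :: "'a::field rmat"
  assumes R: "fin_dim_span {rshift p q S T X | S T. (S,T) \<in> Mpq p q}"
  shows "fin_dim_span {lshift p q S' T' (rshift p q S T X) | S T S' T'.
                     (S, T) \<in> Mpq p q \<and> (S', T') \<in> Mpq p q}"
proof -
  obtain F where F: "finite F" "F \<subseteq> {rshift p q S T X | S T. (S,T) \<in> Mpq p q}"
    "{rshift p q S T X | S T. (S,T) \<in> Mpq p q} \<subseteq> v.span F"
    using fin_basis[OF R] by blast
  obtain E where E: "finite E" "v.span {lshift p q S T X | S T. (S,T) \<in> Mpq p q} \<subseteq> v.span E"
    using rows_to_cols[OF R] unfolding fin_dim_span_def by blast
  have ex: "\<forall>f\<in>F. \<exists>\<sigma>. \<sigma> \<in> Mpq p q \<and> f = rshift p q (fst \<sigma>) (snd \<sigma>) X"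
  proof
    fix f assume "f \<in> F"
    then have "f \<in> {rshift p q S T X | S T. (S,T) \<in> Mpq p q}" using F(2) by blast
    then obtain S T where "f = rshift p q S T X" "(S,T) \<in> Mpq p q" by blast
    then show "\<exists>\<sigma>. \<sigma> \<in> Mpq p q \<and> f = rshift p q (fst \<sigma>) (snd \<sigma>) X"
      by (intro exI[of _ "(S,T)"]) simp
  qed
  obtain \<sigma> where sg: "\<And>f. f \<in> F \<Longrightarrow> \<sigma> f \<in> Mpq p q \<and> f = rshift p q (fst (\<sigma> f)) (snd (\<sigma> f)) X"
  proof -
    from bchoice[OF ex] obtain \<sigma> where "\<forall>f\<in>F. \<sigma> f \<in> Mpq p q \<and> f = rshift p q (fst (\<sigma> f)) (snd (\<sigma> f)) X"
      by (elim exE)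
    then show ?thesis using that by blast
  qed
  define G where "G = (\<lambda>(f, e). rshift p q (fst (\<sigma> f)) (snd (\<sigma> f)) e) ` (F \<times> E)"
  have finG: "finite G" unfolding G_def using F(1) E(1) by simp
  have "g \<in> v.span G" if gin: "g \<in> {lshift p q S' T' (rshift p q S T X) | S T S' T'.
                     (S, T) \<in> Mpq p q \<and> (S', T') \<in> Mpq p q}" for g
  proof -
    obtain S T S' T' where g: "g = lshift p q S' T' (rshift p q S T X)" "(S, T) \<in> Mpq p q"
      "(S', T') \<in> Mpq p q" using gin by blast
    have "rshift p q S T X \<in> {rshift p q S T X | S T. (S,T) \<in> Mpq p q}" using g(2) by blast
    then have "rshift p q S T X \<in> v.span F" by (rule subsetD[OF F(3)])
    then have g1: "g \<in> v.span (lshift p q S' T' ` F)"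
      unfolding g(1) by (rule span_lin_image[OF lshift_add lshift_scale])
    have "lshift p q S' T' f \<in> v.span G" if f: "f \<in> F" for f
    proof -
      obtain S0 T0 where st: "\<sigma> f = (S0, T0)" by fastforce
      have sgf: "\<sigma> f \<in> Mpq p q \<and> f = rshift p q (fst (\<sigma> f)) (snd (\<sigma> f)) X" by (rule sg[OF f])
      have M0: "(S0, T0) \<in> Mpq p q" using conjunct1[OF sgf] unfolding st .
      have fe: "f = rshift p q S0 T0 X" using conjunct2[OF sgf] unfolding st fst_conv snd_conv .
      have eq1: "lshift p q S' T' f = rshift p q S0 T0 (lshift p q S' T' X)"
        unfolding fe by (rule lr_comm[OF M0 g(3)])
      have mem: "lshift p q S' T' X \<in> {lshift p q S T X | S T. (S,T) \<in> Mpq p q}"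
        unfolding mem_Collect_eq by (rule exI[of _ S'], rule exI[of _ T'], rule conjI[OF refl g(3)])
      have "lshift p q S' T' X \<in> v.span E"
        by (rule subsetD[OF E(2) v.span_base[OF mem]])
      then have "rshift p q S0 T0 (lshift p q S' T' X) \<in> v.span (rshift p q S0 T0 ` E)"
        by (rule span_lin_image[OF rshift_add rshift_scale])
      then have in1: "lshift p q S' T' f \<in> v.span (rshift p q S0 T0 ` E)" unfolding eq1 .
      have "rshift p q S0 T0 ` E \<subseteq> G"
      proof
        fix y assume "y \<in> rshift p q S0 T0 ` E"
        then obtain e where e: "e \<in> E" "y = rshift p q S0 T0 e" by blast
        show "y \<in> G" unfolding G_def
          by (rule image_eqI[of _ _ "(f, e)"]) (use e f st in simp_all)
      qed
      then show ?thesis using v.span_mono[of "rshift p q S0 T0 ` E" G] in1 by blast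
    qed
    then have "lshift p q S' T' ` F \<subseteq> v.span G" by blast
    then have "v.span (lshift p q S' T' ` F) \<subseteq> v.span G"
      by (rule v.span_minimal[OF _ v.subspace_span])
    then show ?thesis using g1 by blast
  qed
  then have "{lshift p q S' T' (rshift p q S T X) | S T S' T'.
                     (S, T) \<in> Mpq p q \<and> (S', T') \<in> Mpq p q} \<subseteq> v.span G" by (rule subsetI)
  then show ?thesis by (rule span_sub_fin[OF finG])
qed

lemma birec_rec:
  fixes X :: "'a::field rmat"
  assumes "fin_dim_span {lshift p q S' T' (rshift p q S T X) | S T S' T'.
                     (S, T) \<in> Mpq p q \<and> (S', T') \<in> Mpq p q}"
  shows "fin_dim_span {rshift p q S T X | S T. (S,T) \<in> Mpq p q}"
proof -
  let ?R = "{rshift p q S T X | S T. (S,T) \<in> Mpq p q}"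
  let ?B = "{lshift p q S' T' (rshift p q S T X) | S T S' T'.
                     (S, T) \<in> Mpq p q \<and> (S', T') \<in> Mpq p q}"
  have sub0: "?R \<subseteq> ?B"
  proof
    fix x assume "x \<in> ?R"
    then obtain S T where st: "x = rshift p q S T X" "(S,T) \<in> Mpq p q" by blast
    have "x = lshift p q [] [] (rshift p q S T X) \<and> (S,T) \<in> Mpq p q \<and> ([],[]) \<in> Mpq p q"
      using st by (simp add: l_nil nil_Mpq)
    then show "x \<in> ?B" by blast
  qed
  have sub: "v.span ?R \<subseteq> v.span ?B" by (rule v.span_mono[OF sub0])
  have "\<exists>B. finite B \<and> v.span ?B \<subseteq> v.span B"
    using assms unfolding fin_dim_span_def by blast
  then obtain B where B: "finite B \<and> v.span ?B \<subseteq> v.span B" ..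
  show ?thesis unfolding fin_dim_span_def
    by (rule exI[of _ B], rule conjI[OF conjunct1[OF B] order_trans[OF sub conjunct2[OF B]]])
qed

lemma rshift_iota: "rshift p q S T (iota A) = iota (lshift p q S T A)"
  by (auto simp: rshift_def lshift_def iota_def fun_eq_iff)

lemma fin_iota:
  fixes S :: "'a::field rmat set"
  assumes "fin_dim_span S"
  shows "fin_dim_span (iota ` S)"
proof -
  obtain B where B: "finite B" "v.span S \<subseteq> v.span B" using assms fin_dim_span_def by blast
  have "iota ` S \<subseteq> v.span (iota ` B)"
  proof
    fix x assume "x \<in> iota ` S"
    then obtain s where s: "s \<in> S" "x = iota s" by blast
    have "s \<in> v.span B" by (rule subsetD[OF B(2) v.span_base[OF s(1)]])
    then show "x \<in> v.span (iota ` B)" unfolding s(2)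
      by (rule span_lin_image[OF iota_add iota_scale])
  qed
  then show ?thesis by (rule span_sub_fin[OF finite_imageI[OF B(1)]])
qed

lemma fin_iota_iff:
  fixes S :: "'a::field rmat set"
  shows "fin_dim_span (iota ` S) \<longleftrightarrow> fin_dim_span S"
proof
  assume "fin_dim_span (iota ` S)"
  then have "fin_dim_span (iota ` iota ` S)" by (rule fin_iota)
  moreover have "iota ` iota ` S = S" by (force simp: iota_iota image_image)
  ultimately show "fin_dim_span S" by simp
qed (rule fin_iota)

lemma is_mat_iota: "is_mat p q (iota A) \<longleftrightarrow> is_mat p q A"
proof
  assume h: "is_mat p q (iota A)"
  show "is_mat p q A" unfolding is_mat_def
  proof (intro allI impI)
    fix x :: "nat list \<times> nat list" assume x: "x \<notin> Mpq p q"
    obtain U W where xu: "x = (U, W)" by fastforce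
    have "(rev U, rev W) \<notin> Mpq p q" using x xu by simp
    then have "iota A (rev U, rev W) = 0" using h unfolding is_mat_def by blast
    then show "A x = 0" using xu by (simp add: iota_def)
  qed
next
  assume h: "is_mat p q A"
  show "is_mat p q (iota A)" unfolding is_mat_def
  proof (intro allI impI)
    fix x :: "nat list \<times> nat list" assume x: "x \<notin> Mpq p q"
    obtain U W where xu: "x = (U, W)" by fastforce
    have "(rev U, rev W) \<notin> Mpq p q" using x xu by simp
    then have "A (rev U, rev W) = 0" using h unfolding is_mat_def by blast
    then show "iota A x = 0" using xu by (simp add: iota_def)
  qed
qed

lemma rec_iota:
  fixes A :: "'a::field rmat"
  shows "is_rec p q (iota A) \<longleftrightarrow> is_rec p q A"
proof -
  have "{rshift p q S T (iota A) | S T. (S,T) \<in> Mpq p q} = iota ` {lshift p q S T A | S T. (S,T) \<in> Mpq p q}"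
    by (auto simp: rshift_iota)
  then have "fin_dim_span {rshift p q S T (iota A) | S T. (S,T) \<in> Mpq p q}
     \<longleftrightarrow> fin_dim_span {lshift p q S T A | S T. (S,T) \<in> Mpq p q}"
    by (simp add: fin_iota_iff)
  also have "\<dots> \<longleftrightarrow> fin_dim_span {rshift p q S T A | S T. (S,T) \<in> Mpq p q}"
    using rows_to_cols cols_to_rows by blast
  finally show ?thesis unfolding is_rec_def is_mat_iota by blast
qed

lemma rec_lin:
  fixes A B :: "'a::field rmat"
  assumes A: "is_rec p q A" and B: "is_rec p q B"
  shows "is_rec p q (\<lambda>x. a * A x + b * B x)"
proof -
  obtain BA where BA: "finite BA" "v.span {rshift p q S T A | S T. (S,T) \<in> Mpq p q} \<subseteq> v.span BA"
    using A unfolding is_rec_def fin_dim_span_def by blast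
  obtain BB where BB: "finite BB" "v.span {rshift p q S T B | S T. (S,T) \<in> Mpq p q} \<subseteq> v.span BB"
    using B unfolding is_rec_def fin_dim_span_def by blast
  have "x \<in> v.span (BA \<union> BB)" if xin: "x \<in> {rshift p q S T (\<lambda>x. a * A x + b * B x) | S T. (S,T) \<in> Mpq p q}" for x
  proof -
    obtain S T where st: "x = rshift p q S T (\<lambda>x. a * A x + b * B x)" "(S,T) \<in> Mpq p q"
      using xin by blast
    have e: "x = mscale a (rshift p q S T A) + mscale b (rshift p q S T B)"
      unfolding st(1) by (auto simp: rshift_def mscale_def fun_eq_iff)
    have mA: "rshift p q S T A \<in> {rshift p q S T A | S T. (S,T) \<in> Mpq p q}" using st(2) by blast
    have "rshift p q S T A \<in> v.span BA" by (rule subsetD[OF BA(2) v.span_base[OF mA]])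
    then have 1: "rshift p q S T A \<in> v.span (BA \<union> BB)" using v.span_mono[of BA "BA \<union> BB"] by blast
    have mB: "rshift p q S T B \<in> {rshift p q S T B | S T. (S,T) \<in> Mpq p q}" using st(2) by blast
    have "rshift p q S T B \<in> v.span BB" by (rule subsetD[OF BB(2) v.span_base[OF mB]])
    then have 2: "rshift p q S T B \<in> v.span (BA \<union> BB)" using v.span_mono[of BB "BA \<union> BB"] by blast
    show ?thesis unfolding e by (intro v.span_add v.span_scale 1 2)
  qed
  then have "{rshift p q S T (\<lambda>x. a * A x + b * B x) | S T. (S,T) \<in> Mpq p q} \<subseteq> v.span (BA \<union> BB)"
    by (rule subsetI)
  then have "fin_dim_span {rshift p q S T (\<lambda>x. a * A x + b * B x) | S T. (S,T) \<in> Mpq p q}"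
    by (rule span_sub_fin[rotated]) (simp add: BA(1) BB(1))
  moreover have "is_mat p q (\<lambda>x. a * A x + b * B x)"
    using A B unfolding is_rec_def is_mat_def by simp
  ultimately show ?thesis unfolding is_rec_def by blast
qed

lemma iota_mprod:
  fixes A B :: "'a::field rmat"
  shows "iota (mprod p r q A B) = mprod p r q (iota A) (iota B)"
proof (rule ext, clarify)
  fix U W
  show "iota (mprod p r q A B) (U, W) = mprod p r q (iota A) (iota B) (U, W)"
  proof (cases "(U, W) \<in> Mpq p q")
    case True
    have "(\<Sum>V\<in>{V. length V = length U \<and> set V \<subseteq> {..<r}}. A (rev U, V) * B (V, rev W))
        = (\<Sum>V\<in>{V. length V = length U \<and> set V \<subseteq> {..<r}}. A (rev U, rev V) * B (rev V, rev W))"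
      by (rule sum.reindex_bij_witness[of _ rev rev]) auto
    then show ?thesis using True by (simp add: iota_def mprod_def)
  next
    case False
    then show ?thesis by (simp add: iota_def mprod_def)
  qed
qed

theorem mainTheorem15:
  fixes K_witness :: "'a::field itself"
  shows
   "(\<forall>p q (X :: 'a rmat). is_mat p q X \<longrightarrow> (is_rec p q X \<longleftrightarrow> is_birec p q X))
    \<and> (\<forall>p q (A :: 'a rmat) B c. is_mat p q A \<longrightarrow> is_mat p q (iota A)
          \<and> iota (iota A) = A
          \<and> iota (A + B) = iota A + iota B
          \<and> iota (mscale c A) = mscale c (iota A)
          \<and> (is_rec p q (iota A) \<longleftrightarrow> is_rec p q A))
    \<and> (\<forall>p q (A :: 'a rmat). (2::'a) \<noteq> 0 \<longrightarrow> is_rec p q A \<longrightarrow>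
          is_rec p q (mscale (1/2) (A + iota A)) \<and> is_rec p q (mscale (1/2) (A - iota A)))
    \<and> (\<forall>p r q (A :: 'a rmat) B. is_rec p r A \<longrightarrow> is_rec r q B \<longrightarrow>
          iota (mprod p r q A B) = mprod p r q (iota A) (iota B))"
proof (intro conjI allI impI)
  fix p q and X :: "'a rmat"
  assume "is_mat p q X"
  then show "is_rec p q X \<longleftrightarrow> is_birec p q X"
    unfolding is_rec_def is_birec_def using rec_birec birec_rec by blast
next
  fix p q and A :: "'a rmat"
  assume "is_mat p q A"
  then show "is_mat p q (iota A)" by (simp add: is_mat_iota)
next
  fix A :: "'a rmat" show "iota (iota A) = A" by (rule iota_iota)
next
  fix A B :: "'a rmat" show "iota (A + B) = iota A + iota B" by (rule iota_add)
next
  fix A :: "'a rmat" and c show "iota (mscale c A) = mscale c (iota A)" by (rule iota_scale)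
next
  fix p q and A :: "'a rmat" show "is_rec p q (iota A) \<longleftrightarrow> is_rec p q A" by (rule rec_iota)
next
  fix p q and A :: "'a rmat"
  assume "is_rec p q A"
  moreover have "mscale (1/2) (A + iota A) = (\<lambda>x. (1/2) * A x + (1/2) * iota A x)"
    by (simp add: mscale_def fun_eq_iff algebra_simps)
  moreover have "is_rec p q (\<lambda>x. (1/2) * A x + (1/2) * iota A x)"
    by (rule rec_lin[OF \<open>is_rec p q A\<close> rec_iota[THEN iffD2, OF \<open>is_rec p q A\<close>]])
  ultimately show "is_rec p q (mscale (1/2) (A + iota A))" by simp
next
  fix p q and A :: "'a rmat"
  assume "is_rec p q A"
  moreover have "mscale (1/2) (A - iota A) = (\<lambda>x. (1/2) * A x + (-1/2) * iota A x)"
    by (simp add: mscale_def fun_eq_iff algebra_simps)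
  moreover have "is_rec p q (\<lambda>x. (1/2) * A x + (-1/2) * iota A x)"
    by (rule rec_lin[OF \<open>is_rec p q A\<close> rec_iota[THEN iffD2, OF \<open>is_rec p q A\<close>]])
  ultimately show "is_rec p q (mscale (1/2) (A - iota A))" by simp
next
  fix p r q and A B :: "'a rmat"
  show "iota (mprod p r q A B) = mprod p r q (iota A) (iota B)" by (rule iota_mprod)
qed

end
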